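(* Constructor has a strategy ensuring $g(n,K_3,S_4)\ge \frac{n}{3}(1+o(1))$ as $n\to\infty$, where $S_4$ is the star with $4$ leaves.
   Context: Constructor-Blocker game: given graphs $H$ and $F$, two players, Constructor and Blocker, alternately claim previously unclaimed edges of the complete graph $K_n$, Constructor moving first. Constructor may only claim an edge if her graph (the edges she has claimed) remains $F$-free (contains no subgraph isomorphic to $F$); Blocker may claim any unclaimed edge. The game ends when Constructor cannot claim any more edges or all edges are claimed. The score is the number of copies of $H$ in Constructor's graph at the end. Constructor maximizes, Blocker minimizes; $g(n,H,F)$ denotes the score under optimal play by both. *)

theory Defs
  imports Complex_Main
begin

text \<open>Graphs are given as pairs (vertex set, edge set); edges are 2-element sets.
  The host graph K_n has vertex set {..<n}; Constructor's graph is an edge set C.\<close>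

definition Kn_edges :: "nat \<Rightarrow> nat set set" where
  "Kn_edges n = {e. \<exists>u v. u \<noteq> v \<and> u < n \<and> v < n \<and> e = {u, v}}"

definition copies :: "nat \<Rightarrow> ('b set \<times> 'b set set) \<Rightarrow> nat set set \<Rightarrow> nat" where
  "copies n H C = card {(f ` fst H, (\<lambda>e. f ` e) ` snd H) | f.
      inj_on f (fst H) \<and> f ` fst H \<subseteq> {..<n} \<and> (\<lambda>e. f ` e) ` snd H \<subseteq> C}"

definition free :: "nat \<Rightarrow> ('c set \<times> 'c set set) \<Rightarrow> nat set set \<Rightarrow> bool" where
  "free n F C = (\<not> (\<exists>f. inj_on f (fst F) \<and> f ` fst F \<subseteq> {..<n} \<and> (\<lambda>e. f ` e) ` snd F \<subseteq> C))"

definition legal :: "nat \<Rightarrow> ('c set \<times> 'c set set) \<Rightarrow> nat set set \<Rightarrow> nat set set \<Rightarrow> nat set \<Rightarrow> bool" where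
  "legal n F C B e = (e \<in> Kn_edges n \<and> e \<notin> C \<and> e \<notin> B \<and> free n F (insert e C))"

text \<open>ensures n H F k C B t: from position (C,B) with Constructor to move iff t,
  Constructor has a strategy guaranteeing final score at least k.
  The game ends as soon as Constructor has no legal move (in particular when
  all edges are claimed).\<close>
inductive ensures :: "nat \<Rightarrow> ('b set \<times> 'b set set) \<Rightarrow> ('c set \<times> 'c set set) \<Rightarrow> nat
    \<Rightarrow> nat set set \<Rightarrow> nat set set \<Rightarrow> bool \<Rightarrow> bool"
  for n H F k where
  stop: "\<lbrakk>\<not> (\<exists>e. legal n F C B e); k \<le> copies n H C\<rbrakk> \<Longrightarrow> ensures n H F k C B t"
| cmove: "\<lbrakk>legal n F C B e; ensures n H F k (insert e C) B False\<rbrakk> \<Longrightarrow> ensures n H F k C B True"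
| bmove: "\<lbrakk>\<exists>e. legal n F C B e;
           \<forall>e \<in> Kn_edges n - C - B. ensures n H F k C (insert e B) True\<rbrakk>
          \<Longrightarrow> ensures n H F k C B False"

definition g :: "nat \<Rightarrow> ('b set \<times> 'b set set) \<Rightarrow> ('c set \<times> 'c set set) \<Rightarrow> nat" where
  "g n H F = (GREATEST k. ensures n H F k {} {} True)"

definition K3 :: "nat set \<times> nat set set" where
  "K3 = ({0, 1, 2}, {{0, 1}, {1, 2}, {0, 2}})"

definition S4 :: "nat set \<times> nat set set" where
  "S4 = ({0, 1, 2, 3, 4}, {{0, 1}, {0, 2}, {0, 3}, {0, 4}})"

end

theory Submission
  imports Defs
begin

definition deg :: "nat set set \<Rightarrow> nat \<Rightarrow> nat" where
  "deg S y = card {e\<in>S. y \<in> e}"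

definition Fr :: "nat \<Rightarrow> nat set set \<Rightarrow> nat set" where
  "Fr n C = {v. v < n \<and> (\<forall>e\<in>C. v \<notin> e)}"

definition tri :: "nat \<Rightarrow> nat set set \<Rightarrow> nat set set" where
  "tri n C = {{a,b,c} | a b c. a < n \<and> b < n \<and> c < n \<and> a \<noteq> b \<and> b \<noteq> c \<and> a \<noteq> c
      \<and> {a,b} \<in> C \<and> {b,c} \<in> C \<and> {a,c} \<in> C}"

definition cset :: "nat \<Rightarrow> nat set set \<Rightarrow> (nat set \<times> nat set set) set" where
  "cset n C = {(f ` fst K3, (\<lambda>e. f ` e) ` snd K3) | f.
      inj_on f (fst K3) \<and> f ` fst K3 \<subseteq> {..<n} \<and> (\<lambda>e. f ` e) ` snd K3 \<subseteq> C}"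

lemma copies_K3: "copies n K3 C = card (cset n C)"
  unfolding copies_def cset_def by simp

lemma finite_Kn: "finite (Kn_edges n)"
proof -
  have "Kn_edges n \<subseteq> Pow {..<n}" by (auto simp: Kn_edges_def)
  then show ?thesis by (rule finite_subset) auto
qed

lemma Kn_edges_iff: "{a,b} \<in> Kn_edges n \<longleftrightarrow> a \<noteq> b \<and> a < n \<and> b < n"
  by (auto simp: Kn_edges_def doubleton_eq_iff)

lemma cset_sub: "cset n C \<subseteq> Pow {..<n} \<times> Pow (Pow {..<n})"
proof
  fix p assume "p \<in> cset n C"
  then obtain f where p: "p = (f ` fst K3, (\<lambda>e. f ` e) ` snd K3)"
    and 1: "f ` fst K3 \<subseteq> {..<n}" unfolding cset_def by blast
  then show "p \<in> Pow {..<n} \<times> Pow (Pow {..<n})"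
    by (auto simp: K3_def)
qed

lemma cset_finite: "finite (cset n C)"
  by (rule finite_subset[OF cset_sub]) auto

lemma copies_bound: "copies n K3 C \<le> card (Pow {..<n::nat} \<times> Pow (Pow {..<n}))"
  unfolding copies_K3 by (rule card_mono[OF _ cset_sub]) auto

lemma cset_mono: assumes "C \<subseteq> C'" shows "cset n C \<subseteq> cset n C'"
proof
  fix p assume "p \<in> cset n C"
  then obtain f where p: "p = (f ` fst K3, (\<lambda>e. f ` e) ` snd K3)"
    and 1: "inj_on f (fst K3)" "f ` fst K3 \<subseteq> {..<n}" "(\<lambda>e. f ` e) ` snd K3 \<subseteq> C"
    unfolding cset_def by blast
  have "(\<lambda>e. f ` e) ` snd K3 \<subseteq> C'" using 1(3) assms by (rule order_trans)
  then show "p \<in> cset n C'" unfolding cset_def p using 1(1,2) by blast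
qed

lemma copies_mono: "C \<subseteq> C' \<Longrightarrow> copies n K3 C \<le> copies n K3 C'"
  unfolding copies_K3 by (rule card_mono[OF cset_finite cset_mono])

lemma tri_sub_cset: "tri n C \<subseteq> fst ` cset n C"
proof
  fix T assume "T \<in> tri n C"
  then obtain a b c where T: "T = {a,b,c}" and h: "a < n" "b < n" "c < n" "a \<noteq> b" "b \<noteq> c" "a \<noteq> c"
     "{a,b} \<in> C" "{b,c} \<in> C" "{a,c} \<in> C" unfolding tri_def by blast
  define f where "f = (\<lambda>i::nat. if i = 0 then a else if i = 1 then b else c)"
  have f0: "f 0 = a" "f 1 = b" "f (Suc 0) = b" "f 2 = c" by (auto simp: f_def)
  have img: "f ` fst K3 = {a,b,c}" by (simp add: K3_def f0)
  have inj: "inj_on f (fst K3)" using h by (simp add: K3_def f0)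
  have ed: "(\<lambda>e. f ` e) ` snd K3 = {{a,b},{b,c},{a,c}}" by (simp add: K3_def f0)
  have "(f ` fst K3, (\<lambda>e. f ` e) ` snd K3) \<in> cset n C"
    unfolding cset_def by (rule CollectI, rule exI[of _ f]) (simp add: img ed inj h)
  moreover have "f ` fst K3 = T" by (simp add: img T)
  ultimately show "T \<in> fst ` cset n C" by (metis fst_conv rev_image_eqI)
qed

lemma tri_copies: "card (tri n C) \<le> copies n K3 C"
proof -
  have "card (tri n C) \<le> card (fst ` cset n C)"
    by (rule card_mono[OF _ tri_sub_cset]) (simp add: cset_finite)
  also have "\<dots> \<le> card (cset n C)" by (rule card_image_le[OF cset_finite])
  finally show ?thesis by (simp add: copies_K3)
qed

lemma tri_finite: "finite (tri n C)"
  using finite_surj[OF cset_finite tri_sub_cset] .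

lemma tri_mono: "C \<subseteq> C' \<Longrightarrow> tri n C \<subseteq> tri n C'"
  unfolding tri_def by blast

lemma ensures_bound:
  "ensures n K3 F k C B t \<Longrightarrow> k \<le> card (Pow {..<n::nat} \<times> Pow (Pow {..<n}))"
proof (induction rule: ensures.induct)
  case (stop C B t)
  then show ?case using copies_bound[of n C] by linarith
next
  case (cmove C B e)
  then show ?case by simp
next
  case (bmove C B)
  then obtain e where "legal n F C B e" by blast
  then have "e \<in> Kn_edges n - C - B" by (simp add: legal_def)
  then show ?case using bmove.IH by blast
qed

lemma g_ge: "ensures n K3 F k {} {} True \<Longrightarrow> k \<le> g n K3 F"
  unfolding g_def by (rule Greatest_le_nat[where b = "card (Pow {..<n::nat} \<times> Pow (Pow {..<n}))"])
    (use ensures_bound in blast)+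

lemma endgame:
  "k \<le> copies n K3 C \<Longrightarrow> ensures n K3 F k C B tt"
proof (induction "card (Kn_edges n - C - B)" arbitrary: C B tt rule: less_induct)
  case less
  show ?case
  proof (cases "\<exists>e. legal n F C B e")
    case False
    then show ?thesis using less.prems by (rule stop)
  next
    case True
    then obtain e where e: "legal n F C B e" by blast
    then have eK: "e \<in> Kn_edges n - C - B" by (simp add: legal_def)
    have A: "ensures n K3 F k C B True"
    proof -
      have "card (Kn_edges n - insert e C - B) < card (Kn_edges n - C - B)"
        using eK by (intro psubset_card_mono) (auto simp: finite_Kn)
      moreover have "k \<le> copies n K3 (insert e C)"
        using le_trans[OF less.prems copies_mono[OF subset_insertI]] .
      ultimately have "ensures n K3 F k (insert e C) B False" using less.hyps by blast
      then show ?thesis using e by (auto intro: cmove)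
    qed
    have B: "ensures n K3 F k C B False"
    proof -
      have "ensures n K3 F k C (insert e' B) True" if "e' \<in> Kn_edges n - C - B" for e'
      proof -
        have "card (Kn_edges n - C - insert e' B) < card (Kn_edges n - C - B)"
          using that by (intro psubset_card_mono) (auto simp: finite_Kn)
        then show ?thesis using less.hyps less.prems by blast
      qed
      then show ?thesis using True by (auto intro: bmove)
    qed
    show ?thesis using A B by (metis (full_types))
  qed
qed


lemma deg_insert_le: "finite S \<Longrightarrow> deg (insert e S) y \<le> deg S y + 1"
proof -
  assume f: "finite S"
  have "{x\<in>insert e S. y \<in> x} \<subseteq> insert e {x\<in>S. y \<in> x}" by auto
  then have "deg (insert e S) y \<le> card (insert e {x\<in>S. y \<in> x})"
    unfolding deg_def by (rule card_mono[rotated]) (use f in auto)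
  also have "\<dots> \<le> deg S y + 1" unfolding deg_def by (simp add: card_insert_if f)
  finally show ?thesis .
qed

lemma deg_insert_notin: "y \<notin> e \<Longrightarrow> deg (insert e S) y = deg S y"
  unfolding deg_def by (rule arg_cong[where f=card]) auto

lemma deg_mono: "finite S' \<Longrightarrow> S \<subseteq> S' \<Longrightarrow> deg S y \<le> deg S' y"
  unfolding deg_def by (rule card_mono) auto

lemma deg_Un_le: "finite S \<Longrightarrow> finite E \<Longrightarrow> deg (S \<union> E) y \<le> deg S y + deg E y"
proof -
  assume f: "finite S" "finite E"
  have "{x\<in>S \<union> E. y \<in> x} = {x\<in>S. y \<in> x} \<union> {x\<in>E. y \<in> x}" by auto
  then show ?thesis unfolding deg_def by (simp add: card_Un_le)
qed

lemma deg_Fr: "y \<in> Fr n C \<Longrightarrow> deg C y = 0"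
proof -
  assume "y \<in> Fr n C"
  then have h: "{e\<in>C. y \<in> e} = {}" unfolding Fr_def by auto
  show ?thesis unfolding deg_def h by simp
qed

lemma free_of_deg:
  assumes f: "finite C" and d: "\<forall>v. deg C v \<le> 3"
  shows "free n S4 C"
  unfolding free_def
proof
  assume "\<exists>f. inj_on f (fst S4) \<and> f ` fst S4 \<subseteq> {..<n} \<and> (\<lambda>e. f ` e) ` snd S4 \<subseteq> C"
  then obtain f where inj0: "inj_on f (fst S4)" and sub0: "(\<lambda>e. f ` e) ` snd S4 \<subseteq> C"
    by blast
  have sub: "{{f 0, f 1}, {f 0, f 2}, {f 0, f 3}, {f 0, f 4}} \<subseteq> C"
    using sub0 by (simp add: S4_def)
  have inj: "inj_on f {0,1,2,3,4}" using inj0 by (simp add: S4_def)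
  have dist: "f 0 \<noteq> f 1" "f 0 \<noteq> f 2" "f 0 \<noteq> f 3" "f 0 \<noteq> f 4" "f 1 \<noteq> f 2" "f 1 \<noteq> f 3"
    "f 1 \<noteq> f 4" "f 2 \<noteq> f 3" "f 2 \<noteq> f 4" "f 3 \<noteq> f 4"
    using inj unfolding inj_on_def by (auto simp del: One_nat_def)
  have "{{f 0, f 1}, {f 0, f 2}, {f 0, f 3}, {f 0, f 4}} \<subseteq> {e\<in>C. f 0 \<in> e}" using sub by auto
  then have "card {{f 0, f 1}, {f 0, f 2}, {f 0, f 3}, {f 0, f 4}} \<le> deg C (f 0)"
    unfolding deg_def by (rule card_mono[rotated]) (use f in auto)
  moreover have "card {{f 0, f 1}, {f 0, f 2}, {f 0, f 3}, {f 0, f 4}} = 4"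
    using dist by (simp add: doubleton_eq_iff)
  moreover have "deg C (f 0) \<le> 3" using d by blast
  ultimately show False by linarith
qed

definition nb :: "nat set set \<Rightarrow> nat \<Rightarrow> nat set" where
  "nb S x = {y. {x,y} \<in> S}"

lemma card_nb: assumes "finite S" shows "card (nb S x) \<le> deg S x"
proof -
  have inj: "inj_on (\<lambda>y. {x,y}) (nb S x)" by (auto simp: inj_on_def doubleton_eq_iff)
  have "(\<lambda>y. {x,y}) ` nb S x \<subseteq> {e\<in>S. x \<in> e}" by (auto simp: nb_def)
  then show ?thesis unfolding deg_def using card_inj_on_le[OF inj] assms by auto
qed

definition Hi :: "nat \<Rightarrow> nat \<Rightarrow> nat set set \<Rightarrow> nat set" where
  "Hi n d B = {y. y < n \<and> d < deg B y}"

lemma Hi_count: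
  assumes BK: "B \<subseteq> Kn_edges n"
  shows "(d+1) * card (Hi n d B) \<le> 2 * card B"
proof -
  have fB: "finite B" using finite_subset[OF BK finite_Kn] .
  have fH: "finite (Hi n d B)" unfolding Hi_def by auto
  have "(d+1) * card (Hi n d B) = (\<Sum>y\<in>Hi n d B. d+1)" by simp
  also have "\<dots> \<le> (\<Sum>y\<in>Hi n d B. deg B y)"
    by (rule sum_mono) (auto simp: Hi_def)
  also have "\<dots> = (\<Sum>y\<in>Hi n d B. \<Sum>e\<in>{e. e \<in> B \<and> y \<in> e}. 1)"
    unfolding deg_def by simp
  also have "\<dots> = (\<Sum>e\<in>B. \<Sum>y\<in>{y. y \<in> Hi n d B \<and> y \<in> e}. 1)"
    by (rule sum.swap_restrict[OF fH fB])
  also have "\<dots> \<le> (\<Sum>e\<in>B. 2)"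
  proof (rule sum_mono)
    fix e assume "e \<in> B"
    then obtain a b where "e = {a,b}" using BK by (auto simp: Kn_edges_def)
    then have "{y. y \<in> Hi n d B \<and> y \<in> e} \<subseteq> {a,b}" by auto
    then have "card {y. y \<in> Hi n d B \<and> y \<in> e} \<le> card {a,b}" by (rule card_mono[rotated]) auto
    also have "\<dots> \<le> 2" by (simp add: card_insert_if)
    finally show "(\<Sum>y\<in>{y. y \<in> Hi n d B \<and> y \<in> e}. 1) \<le> (2::nat)" by simp
  qed
  also have "\<dots> = 2 * card B" by simp
  finally show ?thesis .
qed

lemma pick:
  assumes "finite T" "card T < card S"
  shows "\<exists>a\<in>S. a \<notin> T"
proof (rule ccontr)
  assume "\<not> ?thesis"
  then have "S \<subseteq> T" by auto
  then have "card S \<le> card T" using assms(1) by (rule card_mono[rotated])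
  then show False using assms(2) by simp
qed


lemma Fr_insert: "Fr n (insert e C) = Fr n C - e"
  unfolding Fr_def by auto

lemma nb_sub: "B \<subseteq> Kn_edges n \<Longrightarrow> nb B x \<subseteq> {..<n}"
  unfolding nb_def using Kn_edges_iff by blast

lemma Fr_finite: "finite (Fr n C)"
  unfolding Fr_def by auto

lemma tri_new: "u \<in> Fr n C \<Longrightarrow> T \<in> tri n C \<Longrightarrow> u \<notin> T"
  unfolding Fr_def tri_def by blast

lemma tri_in: "a < n \<Longrightarrow> b < n \<Longrightarrow> c < n \<Longrightarrow> a \<noteq> b \<Longrightarrow> b \<noteq> c \<Longrightarrow> a \<noteq> c \<Longrightarrow>
  {a,b} \<in> C \<Longrightarrow> {b,c} \<in> C \<Longrightarrow> {a,c} \<in> C \<Longrightarrow> {a,b,c} \<in> tri n C"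
  unfolding tri_def by blast

lemma tri_grow:
  assumes "C \<subseteq> C'" "u \<in> Fr n C" "T \<in> tri n C'" "u \<in> T"
  shows "card (tri n C') \<ge> Suc (card (tri n C))"
proof -
  have "T \<notin> tri n C" using tri_new[OF assms(2)] assms(4) by blast
  then have "card (insert T (tri n C)) = Suc (card (tri n C))" by (simp add: tri_finite)
  moreover have "insert T (tri n C) \<subseteq> tri n C'" using tri_mono[OF assms(1)] assms(3) by blast
  ultimately show ?thesis using card_mono[OF tri_finite] by metis
qed

lemma deg_step:
  assumes "finite C" "\<forall>v. deg C v \<le> 3" "deg C a \<le> 2" "deg C b \<le> 2"
  shows "\<forall>v. deg (insert {a,b} C) v \<le> 3"
proof
  fix v show "deg (insert {a,b} C) v \<le> 3"
  proof (cases "v \<in> {a,b}")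
    case True
    then have "deg C v \<le> 2" using assms by auto
    then show ?thesis using deg_insert_le[OF assms(1), of "{a,b}" v] by linarith
  next
    case False
    then show ?thesis using assms(2) deg_insert_notin[OF False] by simp
  qed
qed

lemma legal_pair:
  assumes "C \<subseteq> Kn_edges n" "a \<noteq> b" "a < n" "b < n" "{a,b} \<notin> C" "{a,b} \<notin> B"
    "\<forall>v. deg (insert {a,b} C) v \<le> 3"
  shows "legal n S4 C B {a,b}"
proof -
  have "finite (insert {a,b} C)" using finite_subset[OF assms(1) finite_Kn] by simp
  then have "free n S4 (insert {a,b} C)" using assms(7) by (rule free_of_deg)
  then show ?thesis unfolding legal_def using assms by (simp add: Kn_edges_iff)
qed

locale strat =
  fixes n d h M k :: nat
  assumes hbound: "\<And>B. B \<subseteq> Kn_edges n \<Longrightarrow> card B \<le> 2*n \<Longrightarrow> card (Hi n d B) \<le> h"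
    and Mbig: "h + 3*d + 10 \<le> M"
    and kbound: "3*k \<le> n - (M + h + 1)"
begin

definition Inv :: "nat set set \<Rightarrow> nat set set \<Rightarrow> nat set \<Rightarrow> nat \<Rightarrow> bool" where
  "Inv C B P t \<longleftrightarrow> C \<subseteq> Kn_edges n \<and> B \<subseteq> Kn_edges n \<and> (\<forall>v. deg C v \<le> 3) \<and>
     P \<subseteq> {..<n} \<and> P \<inter> Fr n C = {} \<and> (\<forall>x\<in>P. deg C x \<le> 1) \<and> t \<le> card (tri n C) \<and>
     n \<le> 3*t + card P + card (Fr n C) \<and> card B + 2 * card (Fr n C) \<le> 2*n \<and> card P \<le> h + 2"

lemma stopk:
  assumes "Inv C B P t" "card (Fr n C) < M"
  shows "k \<le> copies n K3 C"
proof -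
  have "n \<le> 3*t + (h+2) + (M - 1)" using assms unfolding Inv_def by linarith
  then have "3*k \<le> 3*t" using kbound Mbig by linarith
  then have "k \<le> t" by simp
  also have "t \<le> card (tri n C)" using assms unfolding Inv_def by blast
  also have "\<dots> \<le> copies n K3 C" by (rule tri_copies)
  finally show ?thesis .
qed

lemma legal_exists:
  assumes I: "Inv C B P t" and big: "M \<le> card (Fr n C)"
  shows "\<exists>e. legal n S4 C B e"
proof -
  have CK: "C \<subseteq> Kn_edges n" and BK: "B \<subseteq> Kn_edges n" and dC: "\<forall>v. deg C v \<le> 3"
    and cB: "card B \<le> 2*n" using I unfolding Inv_def by auto
  have fB: "finite B" using finite_subset[OF BK finite_Kn] .
  have fC: "finite C" using finite_subset[OF CK finite_Kn] .
  have cH: "card (Hi n d B) \<le> h" using hbound[OF BK cB] .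
  have fH: "finite (Hi n d B)" unfolding Hi_def by auto
  have "card (Hi n d B) < card (Fr n C)" using cH Mbig big by linarith
  then obtain a where a: "a \<in> Fr n C" "a \<notin> Hi n d B" using pick[OF fH] by blast
  then have da: "deg B a \<le> d" "a < n" unfolding Hi_def Fr_def by auto
  have fnb: "finite (nb B a)" using nb_sub[OF BK] finite_subset by blast
  have "card (insert a (nb B a)) \<le> d + 1"
    using card_nb[OF fB, of a] da fnb by (simp add: card_insert_if)
  then have "card (insert a (nb B a)) < card (Fr n C)" using Mbig big by linarith
  moreover have "finite (insert a (nb B a))" using fnb by simp
  ultimately obtain b where b: "b \<in> Fr n C" "b \<notin> insert a (nb B a)" using pick by blast
  have "a \<noteq> b" "a < n" "b < n" using a b unfolding Fr_def by auto
  moreover have "{a,b} \<notin> C" using a unfolding Fr_def by auto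
  moreover have "{a,b} \<notin> B" using b unfolding nb_def by auto
  moreover have "\<forall>v. deg (insert {a,b} C) v \<le> 3"
    using deg_step[OF fC dC] deg_Fr[OF a(1)] deg_Fr[OF b(1)] by simp
  ultimately show ?thesis using legal_pair[OF CK] by blast
qed

lemma blocker_end:
  assumes I: "Inv C B P t" and cB: "card B + 1 + 2 * card (Fr n C) \<le> 2*n"
    and IH: "\<And>B'. Inv C B' P t \<Longrightarrow> ensures n K3 S4 k C B' True"
  shows "ensures n K3 S4 k C B False"
proof (cases "\<exists>e. legal n S4 C B e")
  case True
  have "ensures n K3 S4 k C (insert e B) True" if e: "e \<in> Kn_edges n - C - B" for e
  proof (rule IH)
    have BK: "B \<subseteq> Kn_edges n" using I unfolding Inv_def by auto
    have fB: "finite B" using finite_subset[OF BK finite_Kn] .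
    have "card (insert e B) = card B + 1" using e fB by simp
    then show "Inv C (insert e B) P t" using I cB e unfolding Inv_def by auto
  qed
  then show ?thesis using True by (auto intro: bmove)
next
  case False
  then have "\<not> M \<le> card (Fr n C)" using legal_exists[OF I] by blast
  then have "k \<le> copies n K3 C" using stopk[OF I] by simp
  then show ?thesis by (rule stop[OF False])
qed

end


context strat
begin

lemma end_a:
  assumes I: "Inv C B P t" and uvw: "u \<in> Fr n C" "v \<in> Fr n C" "w \<in> Fr n C"
    and dist: "u \<noteq> v" "u \<noteq> w" "v \<noteq> w"
    and BB: "B \<subseteq> B'" "B' \<subseteq> Kn_edges n" "card B' \<le> card B + 3"
    and C': "C' = insert {v,w} (insert {u,w} (insert {u,v} C))"
    and dC': "\<forall>y. deg C' y \<le> 3"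
  shows "Inv C' B' P (Suc t) \<and> card B' + 1 + 2 * card (Fr n C') \<le> 2*n \<and> card (Fr n C') < card (Fr n C)"
proof -
  have CK: "C \<subseteq> Kn_edges n" and PF: "P \<inter> Fr n C = {}" and Pn: "P \<subseteq> {..<n}"
    and dP: "\<forall>x\<in>P. deg C x \<le> 1" and tt: "t \<le> card (tri n C)"
    and cnt: "n \<le> 3*t + card P + card (Fr n C)" and cB: "card B + 2 * card (Fr n C) \<le> 2*n"
    and cP: "card P \<le> h + 2"
    using I unfolding Inv_def by auto
  have lt: "u < n" "v < n" "w < n" using uvw unfolding Fr_def by auto
  have C'K: "C' \<subseteq> Kn_edges n" using CK lt dist by (simp add: C' Kn_edges_iff)
  have FrC': "Fr n C' = Fr n C - {u,v,w}" by (auto simp: C' Fr_insert)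
  have c3: "card {u,v,w} = 3" using dist by simp
  have cFr: "card (Fr n C') + 3 = card (Fr n C)"
  proof -
    have "card (Fr n C - {u,v,w}) = card (Fr n C) - card {u,v,w}"
      using uvw by (intro card_Diff_subset) auto
    moreover have "card {u,v,w} \<le> card (Fr n C)"
      using uvw by (intro card_mono[OF Fr_finite]) auto
    ultimately show ?thesis using FrC' c3 by simp
  qed
  have PF': "P \<inter> Fr n C' = {}" using PF FrC' by auto
  have dP': "\<forall>x\<in>P. deg C' x \<le> 1"
  proof
    fix x assume x: "x \<in> P"
    then have "x \<noteq> u" "x \<noteq> v" "x \<noteq> w" using PF uvw by auto
    then have "deg C' x = deg C x" by (simp add: C' deg_insert_notin)
    then show "deg C' x \<le> 1" using dP x by simp
  qed
  have T: "{u,v,w} \<in> tri n C'" by (rule tri_in) (use lt dist in \<open>auto simp: C'\<close>)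
  have "Suc (card (tri n C)) \<le> card (tri n C')"
    by (rule tri_grow[OF _ uvw(1) T]) (auto simp: C')
  then have tt': "Suc t \<le> card (tri n C')" using tt by simp
  show ?thesis unfolding Inv_def
    using C'K BB dC' Pn PF' dP' tt' cnt cB cP cFr by auto
qed

lemma end_bc:
  assumes I: "Inv C B P t" and uvw: "u \<in> Fr n C" "v \<in> Fr n C" "w \<in> Fr n C"
    and dist: "u \<noteq> v" "u \<noteq> w" "v \<noteq> w" "x \<noteq> u" "x \<noteq> v" "x \<noteq> w"
    and x: "x < n" "x \<in> P \<or> x \<in> Fr n C" "x \<in> Fr n C \<Longrightarrow> card P \<le> h + 1"
    and BB: "B \<subseteq> B'" "B' \<subseteq> Kn_edges n" "card B' \<le> card B + 3"
    and C': "C' = insert {v,x} (insert {u,x} (insert {u,w} (insert {u,v} C)))"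
    and dC': "\<forall>y. deg C' y \<le> 3"
  shows "Inv C' B' (insert w (P - {x})) (Suc t) \<and> card B' + 1 + 2 * card (Fr n C') \<le> 2*n
     \<and> card (Fr n C') < card (Fr n C)"
proof -
  have CK: "C \<subseteq> Kn_edges n" and PF: "P \<inter> Fr n C = {}" and Pn: "P \<subseteq> {..<n}"
    and dP: "\<forall>x\<in>P. deg C x \<le> 1" and tt: "t \<le> card (tri n C)"
    and cnt: "n \<le> 3*t + card P + card (Fr n C)" and cB: "card B + 2 * card (Fr n C) \<le> 2*n"
    and cP: "card P \<le> h + 2"
    using I unfolding Inv_def by auto
  have fC: "finite C" using finite_subset[OF CK finite_Kn] .
  have fP: "finite P" using Pn finite_subset by blast
  have lt: "u < n" "v < n" "w < n" using uvw unfolding Fr_def by auto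
  have C'K: "C' \<subseteq> Kn_edges n" using CK lt dist x by (simp add: C' Kn_edges_iff)
  have FrC': "Fr n C' = Fr n C - {u,v,w,x}" by (auto simp: C' Fr_insert)
  have cFr: "card (Fr n C') + 3 + (if x \<in> Fr n C then 1 else 0) = card (Fr n C)"
  proof -
    let ?S = "{u,v,w,x} \<inter> Fr n C"
    have "Fr n C' = Fr n C - ?S" using FrC' by auto
    moreover have "card (Fr n C - ?S) = card (Fr n C) - card ?S"
      by (intro card_Diff_subset) auto
    moreover have "card ?S \<le> card (Fr n C)"
      by (intro card_mono[OF Fr_finite]) auto
    moreover have "card ?S = 3 + (if x \<in> Fr n C then 1 else 0)"
    proof (cases "x \<in> Fr n C")
      case True
      then have "?S = {u,v,w,x}" using uvw by auto
      then show ?thesis using dist True by simp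
    next
      case False
      then have "?S = {u,v,w}" using uvw by auto
      then show ?thesis using dist False by simp
    qed
    ultimately show ?thesis by simp
  qed
  have wP: "w \<notin> P" using PF uvw by auto
  have cP': "card (insert w (P - {x})) + (if x \<in> Fr n C then 0 else 1) = card P + 1"
  proof (cases "x \<in> Fr n C")
    case True
    then have "x \<notin> P" using PF by auto
    then show ?thesis using True wP fP by simp
  next
    case False
    then have "x \<in> P" using x by auto
    moreover have "card P > 0" using \<open>x \<in> P\<close> fP card_gt_0_iff by blast
    ultimately show ?thesis using False wP fP by (simp add: card_Diff_singleton)
  qed
  have P'n: "insert w (P - {x}) \<subseteq> {..<n}" using Pn lt by auto
  have PF': "insert w (P - {x}) \<inter> Fr n C' = {}" using PF FrC' by auto
  have dP': "\<forall>y\<in>insert w (P - {x}). deg C' y \<le> 1"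
  proof
    fix y assume y: "y \<in> insert w (P - {x})"
    show "deg C' y \<le> 1"
    proof (cases "y = w")
      case True
      have "deg C' w = deg (insert {u,w} (insert {u,v} C)) w"
        using dist by (simp add: C' deg_insert_notin)
      also have "\<dots> \<le> deg (insert {u,v} C) w + 1" by (rule deg_insert_le) (simp add: fC)
      also have "deg (insert {u,v} C) w = deg C w" using dist by (simp add: deg_insert_notin)
      also have "\<dots> = 0" using deg_Fr[OF uvw(3)] .
      finally show ?thesis using True by simp
    next
      case False
      then have yP: "y \<in> P" "y \<noteq> x" using y by auto
      then have "y \<noteq> u" "y \<noteq> v" "y \<noteq> w" using PF uvw by auto
      then have "deg C' y = deg C y" using yP by (simp add: C' deg_insert_notin)
      then show ?thesis using dP yP by simp
    qed
  qed
  have T: "{u,v,x} \<in> tri n C'" by (rule tri_in) (use lt dist x in \<open>auto simp: C'\<close>)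
  have "Suc (card (tri n C)) \<le> card (tri n C')"
    by (rule tri_grow[OF _ uvw(1) T]) (auto simp: C')
  then have tt': "Suc t \<le> card (tri n C')" using tt by simp
  have cP'': "card (insert w (P - {x})) \<le> h + 2"
    using cP' cP x(3) by (cases "x \<in> Fr n C") auto
  show ?thesis unfolding Inv_def
    using C'K BB dC' P'n PF' dP' tt' cnt cB cP'' cFr cP' by (cases "x \<in> Fr n C") auto
qed

end


lemma card_le3: "card {a,b,c::nat} \<le> 3"
  by (simp add: card_insert_if)

lemma card_le2: "card {a,b::nat} \<le> 2"
  by (simp add: card_insert_if)

context strat
begin

lemma deg_chain:
  assumes I: "Inv C B P t" and uvw: "u \<in> Fr n C" "v \<in> Fr n C" "w \<in> Fr n C"
    and dist: "u \<noteq> v" "u \<noteq> w" "v \<noteq> w" "x \<noteq> u" "x \<noteq> v" "x \<noteq> w"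
    and dx: "deg C x \<le> 1"
  shows "\<forall>y. deg (insert {u,v} C) y \<le> 3"
    and "\<forall>y. deg (insert {u,w} (insert {u,v} C)) y \<le> 3"
    and "\<forall>y. deg (insert {v,w} (insert {u,w} (insert {u,v} C))) y \<le> 3"
    and "\<forall>y. deg (insert {u,x} (insert {u,w} (insert {u,v} C))) y \<le> 3"
    and "\<forall>y. deg (insert {v,x} (insert {u,x} (insert {u,w} (insert {u,v} C)))) y \<le> 3"
    and "\<forall>y. deg (insert {w,x} (insert {u,x} (insert {u,w} (insert {u,v} C)))) y \<le> 3"
    and "deg (insert {u,v} C) u \<le> 1" "deg (insert {u,v} C) x \<le> 1"
proof -
  have CK: "C \<subseteq> Kn_edges n" and dC: "\<forall>v. deg C v \<le> 3" using I unfolding Inv_def by auto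
  have fC: "finite C" using finite_subset[OF CK finite_Kn] .
  have d0: "deg C u = 0" "deg C v = 0" "deg C w = 0" using deg_Fr uvw by auto
  define C1 where "C1 = insert {u,v} C"
  define C2 where "C2 = insert {u,w} C1"
  define C3 where "C3 = insert {u,x} C2"
  have f1: "finite C1" "finite C2" "finite C3" using fC by (auto simp: C1_def C2_def C3_def)
  have i1: "deg C1 y \<le> deg C y + 1" for y unfolding C1_def by (rule deg_insert_le[OF fC])
  have i2: "deg C2 y \<le> deg C1 y + 1" for y unfolding C2_def by (rule deg_insert_le[OF f1(1)])
  have i3: "deg C3 y \<le> deg C2 y + 1" for y unfolding C3_def by (rule deg_insert_le[OF f1(2)])
  have a1: "deg C1 u \<le> 1" "deg C1 v \<le> 1" "deg C1 w = 0" "deg C1 x \<le> 1"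
  proof -
    show "deg C1 u \<le> 1" using i1[of u] d0 by simp
    show "deg C1 v \<le> 1" using i1[of v] d0 by simp
    show "deg C1 w = 0" using d0 dist unfolding C1_def by (simp add: deg_insert_notin)
    show "deg C1 x \<le> 1" using dx dist unfolding C1_def by (simp add: deg_insert_notin)
  qed
  have a2: "deg C2 u \<le> 2" "deg C2 v \<le> 1" "deg C2 w \<le> 1" "deg C2 x \<le> 1"
  proof -
    show "deg C2 u \<le> 2" using i2[of u] a1 by simp
    show "deg C2 w \<le> 1" using i2[of w] a1 by simp
    show "deg C2 v \<le> 1" using a1 dist unfolding C2_def by (simp add: deg_insert_notin)
    show "deg C2 x \<le> 1" using a1 dist unfolding C2_def by (simp add: deg_insert_notin)
  qed
  have a3: "deg C3 v \<le> 1" "deg C3 w \<le> 1" "deg C3 x \<le> 2"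
  proof -
    show "deg C3 x \<le> 2" using i3[of x] a2 by simp
    show "deg C3 w \<le> 1" using a2 dist unfolding C3_def by (simp add: deg_insert_notin)
    show "deg C3 v \<le> 1" using a2 dist unfolding C3_def by (simp add: deg_insert_notin)
  qed
  have s1: "\<forall>y. deg C1 y \<le> 3" unfolding C1_def by (rule deg_step[OF fC dC]) (use d0 in auto)
  have s2: "\<forall>y. deg C2 y \<le> 3" unfolding C2_def by (rule deg_step[OF f1(1) s1]) (use a1 in auto)
  have s3: "\<forall>y. deg C3 y \<le> 3" unfolding C3_def by (rule deg_step[OF f1(2) s2]) (use a2 in auto)
  have s4: "\<forall>y. deg (insert {v,w} C2) y \<le> 3" by (rule deg_step[OF f1(2) s2]) (use a2 in auto)
  have s5: "\<forall>y. deg (insert {v,x} C3) y \<le> 3" by (rule deg_step[OF f1(3) s3]) (use a3 in auto)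
  have s6: "\<forall>y. deg (insert {w,x} C3) y \<le> 3" by (rule deg_step[OF f1(3) s3]) (use a3 in auto)
  show "\<forall>y. deg (insert {u,v} C) y \<le> 3"
    and "\<forall>y. deg (insert {u,w} (insert {u,v} C)) y \<le> 3"
    and "\<forall>y. deg (insert {v,w} (insert {u,w} (insert {u,v} C))) y \<le> 3"
    and "\<forall>y. deg (insert {u,x} (insert {u,w} (insert {u,v} C))) y \<le> 3"
    and "\<forall>y. deg (insert {v,x} (insert {u,x} (insert {u,w} (insert {u,v} C)))) y \<le> 3"
    and "\<forall>y. deg (insert {w,x} (insert {u,x} (insert {u,w} (insert {u,v} C)))) y \<le> 3"
    and "deg (insert {u,v} C) u \<le> 1" "deg (insert {u,v} C) x \<le> 1"
    using s1 s2 s3 s4 s5 s6 a1 unfolding C1_def C2_def C3_def by auto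
qed

end


context strat
begin

lemma step4:
  assumes I: "Inv C B P t" and uvw: "u \<in> Fr n C" "v \<in> Fr n C" "w \<in> Fr n C"
    and dist: "u \<noteq> v" "u \<noteq> w" "v \<noteq> w" "x \<noteq> u" "x \<noteq> v" "x \<noteq> w"
    and x: "x < n" "x \<in> P \<or> x \<in> Fr n C" "x \<in> Fr n C \<Longrightarrow> card P \<le> h + 1" "deg C x \<le> 1"
    and B3: "B \<subseteq> B3" "B3 \<subseteq> Kn_edges n" "card B3 \<le> card B + 3"
    and fr: "{v,x} \<notin> B3 \<or> {w,x} \<notin> B3"
    and IH: "\<And>C' B' P' t'. Inv C' B' P' t' \<Longrightarrow> card (Fr n C') < card (Fr n C) \<Longrightarrow>
               ensures n K3 S4 k C' B' True"
  shows "ensures n K3 S4 k (insert {u,x} (insert {u,w} (insert {u,v} C))) B3 True"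
proof -
  define C3 where "C3 = insert {u,x} (insert {u,w} (insert {u,v} C))"
  have CK: "C \<subseteq> Kn_edges n" using I unfolding Inv_def by auto
  have lt: "u < n" "v < n" "w < n" using uvw unfolding Fr_def by auto
  have C3K: "C3 \<subseteq> Kn_edges n" using CK lt dist x by (simp add: C3_def Kn_edges_iff)
  have nC: "{v,x} \<notin> C3" "{w,x} \<notin> C3"
    using uvw dist unfolding C3_def Fr_def by (auto simp: doubleton_eq_iff)
  note dc = deg_chain[OF I uvw dist x(4)]
  note dcs = deg_chain[OF I uvw(1,3,2) dist(2,1) dist(3)[symmetric] dist(4,6,5) x(4)]
  show ?thesis
  proof (cases "{v,x} \<notin> B3")
    case True
    define C4 where "C4 = insert {v,x} C3"
    have leg: "legal n S4 C3 B3 {v,x}"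
      by (rule legal_pair[OF C3K]) (use dist lt x nC True dc(5) in \<open>auto simp: C3_def\<close>)
    have E: "Inv C4 B3 (insert w (P - {x})) (Suc t) \<and> card B3 + 1 + 2 * card (Fr n C4) \<le> 2*n
       \<and> card (Fr n C4) < card (Fr n C)"
      by (rule end_bc[OF I uvw dist x(1-3) B3]) (use dc(5) in \<open>auto simp: C4_def C3_def\<close>)
    have "ensures n K3 S4 k C4 B3 False"
      by (rule blocker_end) (use E IH in auto)
    then show ?thesis unfolding C3_def[symmetric] C4_def using leg by (rule cmove[rotated])
  next
    case False
    then have fw: "{w,x} \<notin> B3" using fr by blast
    define C4 where "C4 = insert {w,x} C3"
    have leg: "legal n S4 C3 B3 {w,x}"
      by (rule legal_pair[OF C3K]) (use dist lt x nC fw dc(6) in \<open>auto simp: C3_def\<close>)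
    have C4eq: "C4 = insert {w,x} (insert {u,x} (insert {u,v} (insert {u,w} C)))"
      by (simp add: C4_def C3_def insert_commute)
    have E: "Inv C4 B3 (insert v (P - {x})) (Suc t) \<and> card B3 + 1 + 2 * card (Fr n C4) \<le> 2*n
       \<and> card (Fr n C4) < card (Fr n C)"
      by (rule end_bc[OF I uvw(1,3,2) dist(2,1) dist(3)[symmetric] dist(4,6,5) x(1-3) B3 C4eq])
        (use dc(6) in \<open>auto simp: C4_def C3_def\<close>)
    have "ensures n K3 S4 k C4 B3 False"
      by (rule blocker_end) (use E IH in auto)
    then show ?thesis unfolding C3_def[symmetric] C4_def using leg by (rule cmove[rotated])
  qed
qed

end


context strat
begin

lemma step3:
  assumes I: "Inv C B P t" and uvw: "u \<in> Fr n C" "v \<in> Fr n C" "w \<in> Fr n C"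
    and dist: "u \<noteq> v" "u \<noteq> w" "v \<noteq> w" "x \<noteq> u" "x \<noteq> v" "x \<noteq> w"
    and x: "x < n" "x \<in> P \<or> x \<in> Fr n C" "x \<in> Fr n C \<Longrightarrow> card P \<le> h + 1" "deg C x \<le> 1"
    and B1: "B \<subseteq> B1" "B1 \<subseteq> Kn_edges n" "card B1 \<le> card B + 1"
    and nb1: "{v,w} \<notin> B1" "{u,x} \<notin> B1" "{v,x} \<notin> B1" "{w,x} \<notin> B1"
    and e: "e \<in> Kn_edges n" "e \<notin> B1"
    and IH: "\<And>C' B' P' t'. Inv C' B' P' t' \<Longrightarrow> card (Fr n C') < card (Fr n C) \<Longrightarrow>
               ensures n K3 S4 k C' B' True"
  shows "ensures n K3 S4 k (insert {u,w} (insert {u,v} C)) (insert e B1) True"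
proof -
  define C2 where "C2 = insert {u,w} (insert {u,v} C)"
  define B2 where "B2 = insert e B1"
  have CK: "C \<subseteq> Kn_edges n" using I unfolding Inv_def by auto
  have fB1: "finite B1" using finite_subset[OF B1(2) finite_Kn] .
  have B2: "B \<subseteq> B2" "B2 \<subseteq> Kn_edges n" "card B2 \<le> card B + 2"
    using B1 e fB1 by (auto simp: B2_def)
  have lt: "u < n" "v < n" "w < n" using uvw unfolding Fr_def by auto
  have C2K: "C2 \<subseteq> Kn_edges n" using CK lt dist by (simp add: C2_def Kn_edges_iff)
  have nC: "{v,w} \<notin> C2" "{u,x} \<notin> C2"
    using uvw dist unfolding C2_def Fr_def by (auto simp: doubleton_eq_iff)
  note dc = deg_chain[OF I uvw dist x(4)]
  show ?thesis unfolding C2_def[symmetric] B2_def[symmetric]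
  proof (cases "{v,w} \<notin> B2")
    case True
    define C3 where "C3 = insert {v,w} C2"
    have leg: "legal n S4 C2 B2 {v,w}"
      by (rule legal_pair[OF C2K]) (use dist lt nC True dc(3) in \<open>auto simp: C2_def\<close>)
    have E: "Inv C3 B2 P (Suc t) \<and> card B2 + 1 + 2 * card (Fr n C3) \<le> 2*n
       \<and> card (Fr n C3) < card (Fr n C)"
      by (rule end_a[OF I uvw dist(1-3) B2(1,2) le_trans[OF B2(3)]]) (use dc(3) in \<open>auto simp: C3_def C2_def\<close>)+
    have "ensures n K3 S4 k C3 B2 False"
      by (rule blocker_end) (use E IH in auto)
    then show "ensures n K3 S4 k C2 B2 True" unfolding C3_def using leg by (rule cmove[rotated])
  next
    case False
    then have ev: "e = {v,w}" using nb1(1) by (auto simp: B2_def)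
    have nb2: "{u,x} \<notin> B2" "{v,x} \<notin> B2" "{w,x} \<notin> B2"
      using nb1 ev dist by (auto simp: B2_def doubleton_eq_iff)
    define C3 where "C3 = insert {u,x} C2"
    have leg: "legal n S4 C2 B2 {u,x}"
      by (rule legal_pair[OF C2K]) (use dist lt x nC nb2 dc(4) in \<open>auto simp: C2_def\<close>)
    have C3K: "C3 \<subseteq> Kn_edges n" using C2K lt dist x by (simp add: C3_def Kn_edges_iff)
    have nC3: "{v,x} \<notin> C3"
      using uvw dist unfolding C3_def C2_def Fr_def by (auto simp: doubleton_eq_iff)
    have leg2: "legal n S4 C3 B2 {v,x}"
      by (rule legal_pair[OF C3K]) (use dist lt x nC3 nb2 dc(5) in \<open>auto simp: C3_def C2_def\<close>)
    have "ensures n K3 S4 k C3 (insert e'' B2) True" if e'': "e'' \<in> Kn_edges n - C3 - B2" for e''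
    proof -
      have fB2: "finite B2" using finite_subset[OF B2(2) finite_Kn] .
      have B3: "B \<subseteq> insert e'' B2" "insert e'' B2 \<subseteq> Kn_edges n" "card (insert e'' B2) \<le> card B + 3"
        using B2 e'' fB2 by (auto simp: card_insert_if)
      have fr: "{v,x} \<notin> insert e'' B2 \<or> {w,x} \<notin> insert e'' B2"
        using nb2 dist by (auto simp: doubleton_eq_iff)
      show ?thesis unfolding C3_def C2_def
        by (rule step4[OF I uvw dist x B3 fr IH])
    qed
    then have "ensures n K3 S4 k C3 B2 False" using leg2 by (auto intro: bmove)
    then show "ensures n K3 S4 k C2 B2 True" unfolding C3_def using leg by (rule cmove[rotated])
  qed
qed

end


context strat
begin

lemma step2:
  assumes I: "Inv C B P t" and uv: "u \<in> Fr n C" "v \<in> Fr n C" "u \<noteq> v"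
    and big: "M \<le> card (Fr n C)"
    and xs: "x1 \<noteq> x2" "x1 \<noteq> u" "x1 \<noteq> v" "x2 \<noteq> u" "x2 \<noteq> v" "x1 < n" "x2 < n"
      "x1 \<in> P \<or> x1 \<in> Fr n C" "x2 \<in> P \<or> x2 \<in> Fr n C"
      "x1 \<in> Fr n C \<Longrightarrow> card P \<le> h + 1" "x2 \<in> Fr n C \<Longrightarrow> card P \<le> h + 1"
      "deg C x1 \<le> 1" "deg C x2 \<le> 1"
    and dB: "deg B u \<le> d" "deg B v \<le> d" "deg B x1 \<le> d" "deg B x2 \<le> d"
    and nbB: "{u,x1} \<notin> B" "{v,x1} \<notin> B" "{u,x2} \<notin> B" "{v,x2} \<notin> B"
    and e: "e \<in> Kn_edges n" "e \<notin> B"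
    and IH: "\<And>C' B' P' t'. Inv C' B' P' t' \<Longrightarrow> card (Fr n C') < card (Fr n C) \<Longrightarrow>
               ensures n K3 S4 k C' B' True"
  shows "ensures n K3 S4 k (insert {u,v} C) (insert e B) True"
proof -
  define B1 where "B1 = insert e B"
  define C1 where "C1 = insert {u,v} C"
  have CK: "C \<subseteq> Kn_edges n" and BK: "B \<subseteq> Kn_edges n" using I unfolding Inv_def by auto
  have fB: "finite B" using finite_subset[OF BK finite_Kn] .
  have B1: "B \<subseteq> B1" "B1 \<subseteq> Kn_edges n" "card B1 \<le> card B + 1"
    using BK e fB by (auto simp: B1_def)
  have fB1: "finite B1" using finite_subset[OF B1(2) finite_Kn] .
  have dB1: "deg B1 y \<le> deg B y + 1" for y unfolding B1_def by (rule deg_insert_le[OF fB])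
  obtain x where xx: "x = x1 \<or> x = x2" and xf: "{u,x} \<notin> B1" "{v,x} \<notin> B1"
  proof (cases "{u,x1} \<notin> B1 \<and> {v,x1} \<notin> B1")
    case True then show ?thesis using that by blast
  next
    case False
    then have "e = {u,x1} \<or> e = {v,x1}" using nbB by (auto simp: B1_def)
    then have "{u,x2} \<notin> B1 \<and> {v,x2} \<notin> B1" using nbB xs uv(3) by (auto simp: B1_def doubleton_eq_iff)
    then show ?thesis using that by blast
  qed
  have xp: "x \<noteq> u" "x \<noteq> v" "x < n" "x \<in> P \<or> x \<in> Fr n C" "x \<in> Fr n C \<Longrightarrow> card P \<le> h + 1"
    "deg C x \<le> 1" "deg B x \<le> d" using xx xs dB by auto
  have lt: "u < n" "v < n" using uv unfolding Fr_def by auto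
  define T where "T = {u,v,x} \<union> nb B1 u \<union> nb B1 v \<union> nb B1 x"
  have fnb: "finite (nb B1 y)" for y using nb_sub[OF B1(2)] finite_subset by blast
  have cnb: "card (nb B1 y) \<le> deg B y + 1" for y using card_nb[OF fB1, of y] dB1[of y] by linarith
  have "card T \<le> card {u,v,x} + card (nb B1 u) + card (nb B1 v) + card (nb B1 x)"
    unfolding T_def by (meson card_Un_le le_trans add_le_mono1 add_le_mono)
  also have "\<dots> \<le> 3 + (d+1) + (d+1) + (d+1)"
    using card_le3[of u v x] cnb[of u] cnb[of v] cnb[of x] dB xp(7) by linarith
  finally have "card T < card (Fr n C)" using Mbig big by linarith
  moreover have "finite T" unfolding T_def using fnb by simp
  ultimately obtain w where w: "w \<in> Fr n C" "w \<notin> T" using pick by blast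
  have wd: "w \<noteq> u" "w \<noteq> v" "w \<noteq> x" using w(2) unfolding T_def by auto
  have wB: "{u,w} \<notin> B1" "{v,w} \<notin> B1" "{w,x} \<notin> B1"
    using w(2) unfolding T_def nb_def by (auto simp: insert_commute)
  have wn: "w < n" using w unfolding Fr_def by auto
  have dist: "u \<noteq> v" "u \<noteq> w" "v \<noteq> w" "x \<noteq> u" "x \<noteq> v" "x \<noteq> w" using uv wd xp by auto
  note dc = deg_chain[OF I uv(1,2) w(1) dist xp(6)]
  have C1K: "C1 \<subseteq> Kn_edges n" using CK lt uv by (simp add: C1_def Kn_edges_iff)
  have nC1: "{u,w} \<notin> C1" using uv w dist unfolding C1_def Fr_def by (auto simp: doubleton_eq_iff)
  have leg: "legal n S4 C1 B1 {u,w}"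
    by (rule legal_pair[OF C1K]) (use dist lt wn nC1 wB dc(2) in \<open>auto simp: C1_def\<close>)
  define C2 where "C2 = insert {u,w} C1"
  have C2K: "C2 \<subseteq> Kn_edges n" using C1K lt wn dist by (simp add: C2_def Kn_edges_iff)
  have nC2: "{v,w} \<notin> C2" using uv w dist unfolding C2_def C1_def Fr_def by (auto simp: doubleton_eq_iff)
  have leg2: "legal n S4 C2 B1 {v,w}"
    by (rule legal_pair[OF C2K]) (use dist lt wn nC2 wB dc(3) in \<open>auto simp: C2_def C1_def\<close>)
  have "ensures n K3 S4 k C2 (insert e' B1) True" if e': "e' \<in> Kn_edges n - C2 - B1" for e'
  proof -
    have nb1: "{v,w} \<notin> B1" "{u,x} \<notin> B1" "{v,x} \<notin> B1" "{w,x} \<notin> B1" using wB xf by auto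
    show ?thesis unfolding C2_def C1_def
      by (rule step3[OF I uv(1,2) w(1) dist xp(3,4,5,6) B1 nb1 _ _ IH]) (use e' in auto)
  qed
  then have "ensures n K3 S4 k C2 B1 False" using leg2 by (auto intro: bmove)
  then show ?thesis unfolding C1_def[symmetric] B1_def[symmetric] C2_def using leg by (rule cmove[rotated])
qed

end


context strat
begin

lemma gadget:
  assumes I: "Inv C B P t" and big: "M \<le> card (Fr n C)"
    and IH: "\<And>C' B' P' t'. Inv C' B' P' t' \<Longrightarrow> card (Fr n C') < card (Fr n C) \<Longrightarrow>
               ensures n K3 S4 k C' B' True"
  shows "ensures n K3 S4 k C B True"
proof -
  have CK: "C \<subseteq> Kn_edges n" and BK: "B \<subseteq> Kn_edges n" and Pn: "P \<subseteq> {..<n}"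
    and PF: "P \<inter> Fr n C = {}" and dP: "\<forall>x\<in>P. deg C x \<le> 1" and dC: "\<forall>v. deg C v \<le> 3"
    and cB0: "card B + 2 * card (Fr n C) \<le> 2*n"
    using I unfolding Inv_def by auto
  have cB: "card B \<le> 2*n" using cB0 by linarith
  have fB: "finite B" using finite_subset[OF BK finite_Kn] .
  have fC: "finite C" using finite_subset[OF CK finite_Kn] .
  have fP: "finite P" using Pn finite_subset by blast
  define Hs where "Hs = Hi n d B"
  have cH: "card Hs \<le> h" unfolding Hs_def using hbound[OF BK cB] .
  have fH: "finite Hs" unfolding Hs_def Hi_def by auto
  have lowdeg: "y < n \<Longrightarrow> y \<notin> Hs \<Longrightarrow> deg B y \<le> d" for y unfolding Hs_def Hi_def by auto
  have Frn: "y \<in> Fr n C \<Longrightarrow> y < n" for y unfolding Fr_def by auto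
  obtain x1 x2 where xs: "x1 \<noteq> x2" "x1 < n" "x2 < n"
      "x1 \<in> P \<or> x1 \<in> Fr n C" "x2 \<in> P \<or> x2 \<in> Fr n C"
      "x1 \<in> Fr n C \<Longrightarrow> card P \<le> h + 1" "x2 \<in> Fr n C \<Longrightarrow> card P \<le> h + 1"
      "deg C x1 \<le> 1" "deg C x2 \<le> 1" "deg B x1 \<le> d" "deg B x2 \<le> d"
  proof -
    define X where "X = {x\<in>P. deg B x \<le> d}"
    have fX: "finite X" using fP unfolding X_def by simp
    show ?thesis
    proof (cases "2 \<le> card X")
      case True
      then have "X \<noteq> {}" by auto
      then obtain x1 where x1: "x1 \<in> X" by blast
      have "card (X - {x1}) \<ge> 1" using True x1 fX by (simp add: card_Diff_singleton)
      then have "X - {x1} \<noteq> {}" by (metis card.empty not_one_le_zero)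
      then obtain x2 where x2: "x2 \<in> X - {x1}" by blast
      show ?thesis
        by (rule that[of x1 x2]) (use x1 x2 PF Pn dP in \<open>auto simp: X_def\<close>)
    next
      case False
      have "P \<subseteq> X \<union> Hs" using Pn unfolding X_def Hs_def Hi_def by auto
      then have "card P \<le> card (X \<union> Hs)" using fX fH by (intro card_mono) auto
      also have "\<dots> \<le> card X + card Hs" by (rule card_Un_le)
      finally have cP: "card P \<le> h + 1" using False cH by linarith
      have "card Hs < card (Fr n C)" using cH Mbig big by linarith
      then obtain x1 where x1: "x1 \<in> Fr n C" "x1 \<notin> Hs" using pick[OF fH] by blast
      have "card (insert x1 Hs) < card (Fr n C)" using cH Mbig big fH
        by (simp add: card_insert_if)
      then obtain x2 where x2: "x2 \<in> Fr n C" "x2 \<notin> insert x1 Hs" using pick fH by blast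
      show ?thesis
        by (rule that[of x1 x2]) (use x1 x2 cP deg_Fr Frn lowdeg in auto)
    qed
  qed
  have fnb: "finite (nb B y)" for y using nb_sub[OF BK] finite_subset by blast
  have cnb: "card (nb B y) \<le> deg B y" for y using card_nb[OF fB] .
  define T1 where "T1 = Hs \<union> {x1,x2} \<union> nb B x1 \<union> nb B x2"
  have cT1: "card T1 \<le> h + 2 + d + d"
  proof -
    have "card T1 \<le> card Hs + card {x1,x2} + card (nb B x1) + card (nb B x2)"
      unfolding T1_def by (meson card_Un_le le_trans add_le_mono1 add_le_mono)
    also have "\<dots> \<le> h + 2 + d + d" using cH card_le2[of x1 x2] cnb[of x1] cnb[of x2] xs by linarith
    finally show ?thesis .
  qed
  then have "card T1 < card (Fr n C)" using Mbig big by linarith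
  moreover have fT1: "finite T1" unfolding T1_def using fnb fH by simp
  ultimately obtain u where u: "u \<in> Fr n C" "u \<notin> T1" using pick by blast
  define T2 where "T2 = T1 \<union> {u} \<union> nb B u"
  have "card T2 \<le> card T1 + card {u} + card (nb B u)"
    unfolding T2_def by (meson card_Un_le le_trans add_le_mono1 add_le_mono)
  also have "\<dots> \<le> h + 2 + d + d + 1 + d"
    using cT1 cnb[of u] lowdeg[OF Frn[OF u(1)]] u(2) unfolding T1_def
    by (simp add: card_insert_if)
  finally have "card T2 < card (Fr n C)" using Mbig big by linarith
  moreover have "finite T2" unfolding T2_def using fT1 fnb by simp
  ultimately obtain v where v: "v \<in> Fr n C" "v \<notin> T2" using pick by blast
  have ud: "u \<noteq> x1" "u \<noteq> x2" "deg B u \<le> d" using u lowdeg Frn unfolding T1_def by auto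
  have vd: "v \<noteq> x1" "v \<noteq> x2" "v \<noteq> u" "deg B v \<le> d" using v lowdeg Frn unfolding T2_def T1_def by auto
  have nbB: "{u,x1} \<notin> B" "{v,x1} \<notin> B" "{u,x2} \<notin> B" "{v,x2} \<notin> B" "{u,v} \<notin> B"
    using u(2) v(2) unfolding T1_def T2_def nb_def by (auto simp: insert_commute)
  have lt: "u < n" "v < n" using u v Frn by auto
  have d0: "deg C u = 0" "deg C v = 0" using deg_Fr u v by auto
  define C1 where "C1 = insert {u,v} C"
  have fC1: "finite C1" using fC by (simp add: C1_def)
  have dC1: "\<forall>y. deg C1 y \<le> 3" unfolding C1_def by (rule deg_step[OF fC dC]) (use d0 in auto)
  have du1: "deg C1 u \<le> 1" using deg_insert_le[OF fC, of "{u,v}" u] d0 by (simp add: C1_def)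
  have dx1: "deg C1 x1 \<le> 1" using xs ud vd by (simp add: C1_def deg_insert_notin)
  have leg: "legal n S4 C B {u,v}"
    by (rule legal_pair[OF CK]) (use vd lt u nbB dC1 in \<open>auto simp: C1_def Fr_def\<close>)
  have C1K: "C1 \<subseteq> Kn_edges n" using CK lt vd by (simp add: C1_def Kn_edges_iff)
  have leg2: "legal n S4 C1 B {u,x1}"
  proof (rule legal_pair[OF C1K])
    show "\<forall>y. deg (insert {u, x1} C1) y \<le> 3" by (rule deg_step[OF fC1 dC1]) (use du1 dx1 in auto)
  qed (use ud vd lt xs u nbB in \<open>auto simp: C1_def Fr_def doubleton_eq_iff\<close>)
  have "ensures n K3 S4 k C1 (insert e B) True" if e: "e \<in> Kn_edges n - C1 - B" for e
    unfolding C1_def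
    by (rule step2[OF I u(1) v(1) vd(3)[symmetric] big xs(1) ud(1)[symmetric] vd(1)[symmetric]
          ud(2)[symmetric] vd(2)[symmetric] xs(2-9) ud(3) vd(4) xs(10,11) nbB(1-4) _ _ IH])
       (use e in auto)
  then have "ensures n K3 S4 k C1 B False" using leg2 by (auto intro: bmove)
  then show ?thesis unfolding C1_def using leg by (rule cmove[rotated])
qed

lemma main: "Inv C B P t \<Longrightarrow> ensures n K3 S4 k C B True"
proof (induction "card (Fr n C)" arbitrary: C B P t rule: less_induct)
  case less
  show ?case
  proof (cases "card (Fr n C) < M")
    case True
    then show ?thesis using endgame stopk[OF less.prems] by blast
  next
    case False
    then show ?thesis using gadget[OF less.prems] less.hyps by auto
  qed
qed

end


context strat
begin

lemma result: "k \<le> g n K3 S4"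
proof -
  have "Inv {} {} {} 0"
  proof -
    have "Fr n {} = {..<n}" unfolding Fr_def by auto
    moreover have "deg {} v = 0" for v unfolding deg_def by simp
    ultimately show ?thesis unfolding Inv_def by auto
  qed
  then show ?thesis by (intro g_ge main)
qed

end

lemma strat_inst:
  fixes n N :: nat
  assumes N: "N > 0"
  defines "d \<equiv> n div N"
  defines "h \<equiv> 4*n div (d+1)"
  defines "M \<equiv> h + 3*d + 10"
  defines "k \<equiv> (n - (M + h + 1)) div 3"
  shows "k \<le> g n K3 S4" and "n \<le> 3*k + M + h + 3" and "h < 4*N" and "d * N \<le> n"
proof -
  interpret strat n d h M k
  proof
    fix B assume BK: "B \<subseteq> Kn_edges n" and cB: "card B \<le> 2*n"
    have "(d+1) * card (Hi n d B) \<le> 4*n" using Hi_count[OF BK, of d] cB by linarith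
    then show "card (Hi n d B) \<le> h" unfolding h_def
      by (simp add: less_eq_div_iff_mult_less_eq mult.commute)
  next
    show "h + 3*d + 10 \<le> M" by (simp add: M_def)
  next
    show "3*k \<le> n - (M + h + 1)" unfolding k_def by simp
  qed
  show "k \<le> g n K3 S4" by (rule result)
  show "n \<le> 3*k + M + h + 3" unfolding k_def by linarith
  have "n < N + N * d" unfolding d_def using dividend_less_times_div[OF N] .
  then have "4*n < 4*N * (d+1)" by (simp add: algebra_simps)
  moreover have "h * (d+1) \<le> 4*n" unfolding h_def by (rule div_times_less_eq_dividend)
  ultimately have "h * (d+1) < (4*N) * (d+1)" by linarith
  then show "h < 4*N" by (rule mult_less_cancel2[THEN iffD1, THEN conjunct2])
  show "d * N \<le> n" unfolding d_def by (simp add: div_times_less_eq_dividend)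
qed

theorem proposition3p5:
  shows "\<forall>\<epsilon>::real>0. \<forall>\<^sub>F n in sequentially.
           real (g n K3 S4) \<ge> (1 - \<epsilon>) * (real n / 3)"
proof (intro allI impI)
  fix \<epsilon> :: real assume ep: "\<epsilon> > 0"
  show "\<forall>\<^sub>F n in sequentially. real (g n K3 S4) \<ge> (1 - \<epsilon>) * (real n / 3)"
  proof (cases "\<epsilon> \<ge> 1")
    case True
    have "real (g n K3 S4) \<ge> (1 - \<epsilon>) * (real n / 3)" for n
    proof -
      have "(1 - \<epsilon>) * (real n / 3) \<le> 0" using True by (simp add: mult_nonpos_nonneg)
      then show ?thesis by (meson of_nat_0_le_iff order_trans)
    qed
    then show ?thesis by simp
  next
    case False
    define N :: nat where "N = nat \<lceil>4 / \<epsilon>\<rceil> + 1"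
    have N0: "N > 0" by (simp add: N_def)
    have NE: "real N * \<epsilon> \<ge> 4"
    proof -
      have "real N \<ge> 4 / \<epsilon>" unfolding N_def by linarith
      then show ?thesis using ep by (simp add: field_simps)
    qed
    define n0 :: nat where "n0 = nat \<lceil>(32 * real N + 60) / \<epsilon>\<rceil>"
    have "real (g n K3 S4) \<ge> (1 - \<epsilon>) * (real n / 3)" if n: "n \<ge> n0" for n
    proof -
      define d where "d = n div N"
      define h where "h = 4*n div (d+1)"
      define M where "M = h + 3*d + 10"
      define k where "k = (n - (M + h + 1)) div 3"
      note R = strat_inst[OF N0, of n, folded d_def, folded h_def, folded M_def, folded k_def]
      have nE: "real n * \<epsilon> \<ge> 32 * real N + 60"
      proof -
        have "real n \<ge> (32 * real N + 60) / \<epsilon>" using n unfolding n0_def by linarith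
        then show ?thesis using ep by (simp add: field_simps)
      qed
      have dN: "real d * real N \<le> real n" using R(4) by (metis of_nat_le_iff of_nat_mult)
      have d4: "4 * real d \<le> real n * \<epsilon>"
      proof -
        have "4 * real d \<le> real d * (real N * \<epsilon>)" using NE by (simp add: mult_left_mono mult.commute)
        also have "\<dots> = (real d * real N) * \<epsilon>" by simp
        also have "\<dots> \<le> real n * \<epsilon>" using dN ep by (simp add: mult_right_mono)
        finally show ?thesis .
      qed
      have k3: "real n \<le> 3 * real k + real M + real h + 3" using R(2) by linarith
      have hN: "real h \<le> 4 * real N" using R(3) by linarith
      have "3 * real k \<ge> (1 - \<epsilon>) * real n"
        using k3 hN d4 nE unfolding M_def by (simp add: algebra_simps) 
      then have "real k \<ge> (1 - \<epsilon>) * (real n / 3)" by simp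
      moreover have "real k \<le> real (g n K3 S4)" using R(1) by simp
      ultimately show ?thesis by linarith
    qed
    then show ?thesis unfolding eventually_sequentially by blast
  qed
qed

end
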